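(* Let $\nu$ be a non-degenerate probability measure on $\mathbb{R}$ with support bounded from above and suppose $A(\nu)=\sup\operatorname{supp}(\nu)<0$. For $\theta\in\Theta=\left(-\infty,\frac{1}{A(\nu)}\right)\cup(0,\infty)$ let $M(\theta)=\int\frac{1}{1-\theta x}\nu(dx)$, $P_\theta(dx)=\frac{1}{M(\theta)(1-\theta x)}\nu(dx)$ and $$k(\theta)=\int x\,P_\theta(dx)=\frac{M(\theta)-1}{\theta M(\theta)}.$$ Then $k$ is strictly increasing on $(0,\infty)$ and on $\left(-\infty,\frac{1}{A(\nu)}\right)$. *)

theory Defs
  imports "HOL-Probability.Probability"
begin

text \<open>Support of a measure on the reals: points all of whose open neighbourhoods
  have positive measure (the smallest closed set of full measure).\<close>
definition msupp :: "real measure \<Rightarrow> real set" where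
  "msupp \<nu> = {x. \<forall>e>0. emeasure \<nu> (ball x e) > 0}"

definition nondegenerate :: "real measure \<Rightarrow> bool" where
  "nondegenerate \<nu> \<longleftrightarrow> (\<forall>a. \<nu> \<noteq> return borel a)"

definition A_sup :: "real measure \<Rightarrow> real" where
  "A_sup \<nu> = Sup (msupp \<nu>)"

definition M_fun :: "real measure \<Rightarrow> real \<Rightarrow> real" where
  "M_fun \<nu> \<theta> = (\<integral>x. 1 / (1 - \<theta> * x) \<partial>\<nu>)"

definition k_fun :: "real measure \<Rightarrow> real \<Rightarrow> real" where
  "k_fun \<nu> \<theta> = (\<integral>x. x / (M_fun \<nu> \<theta> * (1 - \<theta> * x)) \<partial>\<nu>)"

end

theory Submission
  imports Defs
begin

lemma ae_le_A:
  fixes \<nu> :: "real measure"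
  assumes sets: "sets \<nu> = sets borel" and bdd: "bdd_above (msupp \<nu>)"
  shows "AE x in \<nu>. x \<le> A_sup \<nu>"
proof -
  define A where "A = A_sup \<nu>"
  have sp: "space \<nu> = UNIV" using sets_eq_imp_space_eq[OF sets] by simp
  have notin: "\<exists>e>0. emeasure \<nu> (ball y e) = 0" if "y > A" for y
  proof -
    have "y \<notin> msupp \<nu>"
      using cSup_upper[OF _ bdd, of y] that unfolding A_def A_sup_def by force
    then show ?thesis unfolding msupp_def using not_gr_zero by auto
  qed
  have "\<forall>y. \<exists>e. y > A \<longrightarrow> e > 0 \<and> emeasure \<nu> (ball y e) = 0" using notin by metis
  then obtain e where e: "\<And>y. y > A \<Longrightarrow> e y > 0 \<and> emeasure \<nu> (ball y (e y)) = 0" by metis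
  have cnull: "K \<in> null_sets \<nu>" if K: "compact K" "K \<subseteq> {A<..}" for K
  proof -
    have cov: "K \<subseteq> (\<Union>y\<in>K. ball y (e y))" using K e by force
    obtain T where T: "T \<subseteq> K" "finite T" "K \<subseteq> (\<Union>y\<in>T. ball y (e y))"
      using compactE_image[OF K(1) _ cov] by blast
    have "(\<Union>y\<in>T. ball y (e y)) \<in> null_sets \<nu>"
    proof (rule null_sets.finite_UN[OF T(2)])
      fix y assume "y \<in> T"
      then have "y > A" using T K by auto
      then show "ball y (e y) \<in> null_sets \<nu>" using e sets by (auto intro!: null_setsI)
    qed
    moreover have "K \<in> sets \<nu>" using sets K(1) by (simp add: compact_imp_closed)
    ultimately show ?thesis using null_sets_subset T(3) by blast
  qed
  define N where "N = (\<lambda>n::nat. {A + 1 / Suc n .. A + Suc n})"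
  have "\<Union>(range N) \<in> null_sets \<nu>"
  proof (rule null_sets_UN)
    fix n
    have h: "A < A + 1 / Suc n" by simp
    show "N n \<in> null_sets \<nu>" unfolding N_def
    proof (intro cnull)
      show "{A + 1 / real (Suc n)..A + real (Suc n)} \<subseteq> {A<..}"
        using less_le_trans[OF h] by auto
    qed auto
  qed
  moreover have "{x \<in> space \<nu>. \<not> x \<le> A} \<subseteq> \<Union>(range N)"
  proof
    fix x assume "x \<in> {x \<in> space \<nu>. \<not> x \<le> A}"
    then have x: "x > A" by auto
    obtain n1 :: nat where n1: "1 / (x - A) < n1" using reals_Archimedean2 by blast
    obtain n2 :: nat where n2: "x - A < n2" using reals_Archimedean2 by blast
    define n where "n = max n1 n2"
    have "1 / Suc n < x - A"
    proof -
      have "1 / (x - A) < Suc n" using n1 unfolding n_def by linarith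
      then show ?thesis using x by (simp add: field_simps)
    qed
    moreover have "x - A \<le> Suc n" using n2 unfolding n_def by linarith
    ultimately have "x \<in> N n" unfolding N_def by auto
    then show "x \<in> \<Union>(range N)" by blast
  qed
  ultimately show ?thesis unfolding A_def[symmetric] by (rule AE_I')
qed

lemma not_point:
  fixes \<nu> :: "real measure"
  assumes P: "prob_space \<nu>" and sets: "sets \<nu> = sets borel" and nd: "nondegenerate \<nu>"
  shows "\<not> (AE x in \<nu>. x = c)"
proof
  assume ae: "AE x in \<nu>. x = c"
  interpret prob_space \<nu> by fact
  have sp: "space \<nu> = UNIV" using sets_eq_imp_space_eq[OF sets] by simp
  have "\<nu> = return borel c"
  proof (rule measure_eqI)
    show "sets \<nu> = sets (return borel c)" using sets by simp
  next
    fix S assume S: "S \<in> sets \<nu>"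
    then have Sb: "S \<in> sets borel" using sets by simp
    show "emeasure \<nu> S = emeasure (return borel c) S"
    proof (cases "c \<in> S")
      case True
      have "emeasure \<nu> S = emeasure \<nu> (space \<nu>)"
        by (rule emeasure_eq_AE) (use ae True S sp sets.top[of \<nu>] in auto)
      then show ?thesis using True Sb emeasure_space_1 by simp
    next
      case False
      have "emeasure \<nu> S = emeasure \<nu> {}"
        by (rule emeasure_eq_AE) (use ae False S in auto)
      then show ?thesis using False Sb by simp
    qed
  qed
  then show False using nd unfolding nondegenerate_def by blast
qed

lemma pw_alg:
  fixes x c t1 t2 :: real
  assumes a1: "1 - t1 * x \<noteq> 0" and a2: "1 - t2 * x \<noteq> 0" and c2: "1 - t2 * c \<noteq> 0"
  shows "(x - c) * (1 / (1 - t2 * x)) = (1 - t1 * c) / (1 - t2 * c) * ((x - c) * (1 / (1 - t1 * x)))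
     + (t2 - t1) * ((x - c)^2 / ((1 - t2 * x) * (1 - t1 * x) * (1 - t2 * c)))"
proof -
  define u where "u = 1 - t2 * x"
  define v where "v = 1 - t1 * x"
  define w where "w = 1 - t2 * c"
  have eq: "(x - c) * v * w = (1 - t1 * c) * (x - c) * u + (t2 - t1) * (x - c)^2"
    unfolding u_def v_def w_def by algebra
  have "(1 - t1 * c) / w * ((x - c) * (1 / v)) + (t2 - t1) * ((x - c)^2 / (u * v * w))
     = ((1 - t1 * c) * (x - c) * u + (t2 - t1) * (x - c)^2) / (u * v * w)"
    using a1 a2 c2 unfolding u_def[symmetric] v_def[symmetric] w_def[symmetric]
    by (simp add: add_divide_distrib)
  also have "\<dots> = (x - c) * (1 / u)" unfolding eq[symmetric]
    using a1 a2 c2 unfolding u_def[symmetric] v_def[symmetric] w_def[symmetric] by simp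
  finally show ?thesis unfolding u_def v_def w_def by simp
qed

lemma sig_div: fixes a b s :: real assumes "s = 1 \<or> s = -1" shows "a / (s * b) = s * (a / b)"
  using assms by (auto simp only: mult_minus_left mult_1_left divide_minus_right)

lemma key:
  fixes \<nu> :: "real measure" and \<theta>1 \<theta>2 \<sigma> d A :: real
  assumes P: "prob_space \<nu>" and sets: "sets \<nu> = sets borel" and nd: "nondegenerate \<nu>"
    and ae: "AE x in \<nu>. x \<le> A"
    and sig: "\<sigma> = 1 \<or> \<sigma> = -1" and d: "d > 0" and lt: "\<theta>1 < \<theta>2"
    and nz1: "\<theta>1 \<noteq> 0" and nz2: "\<theta>2 \<noteq> 0"
    and bnd: "\<And>\<theta> x. \<theta> \<in> {\<theta>1, \<theta>2} \<Longrightarrow> x \<le> A \<Longrightarrow> \<sigma> * (1 - \<theta> * x) \<ge> d"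
  shows "k_fun \<nu> \<theta>1 < k_fun \<nu> \<theta>2"
proof -
  interpret prob_space \<nu> by fact
  have meas: "f \<in> borel_measurable \<nu>" if "f \<in> borel_measurable borel" for f :: "real \<Rightarrow> real"
    using that measurable_cong_sets[OF sets refl, of borel] by metis
  have ss: "\<sigma> * \<sigma> = 1" using sig by auto
  define h where "h \<theta> x = 1 / (1 - \<theta> * x)" for \<theta> x :: real
  have dnz: "1 - \<theta> * x \<noteq> 0" if "\<theta> \<in> {\<theta>1, \<theta>2}" "x \<le> A" for \<theta> x
    using bnd[OF that] d by auto
  have absb: "\<bar>1 - \<theta> * x\<bar> \<ge> d" if "\<theta> \<in> {\<theta>1, \<theta>2}" "x \<le> A" for \<theta> x
    using bnd[OF that] sig by auto
  have hint: "integrable \<nu> (h \<theta>)" if th: "\<theta> \<in> {\<theta>1, \<theta>2}" for \<theta>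
  proof (rule Bochner_Integration.integrable_bound[of _ "\<lambda>_. 1 / d"])
    show "integrable \<nu> (\<lambda>_. 1 / d)" by simp
    show "h \<theta> \<in> borel_measurable \<nu>" unfolding h_def by (intro meas) measurable
    show "AE x in \<nu>. norm (h \<theta> x) \<le> norm (1 / d)"
      using ae
    proof eventually_elim
      case (elim x)
      have "\<bar>1 - \<theta> * x\<bar> \<ge> d" using absb[OF th elim] .
      then show ?case using d unfolding h_def
        by (simp add: divide_simps abs_divide)
    qed
  qed
  have xh_eq: "AE x in \<nu>. x * h \<theta> x = (h \<theta> x - 1) / \<theta>" if th: "\<theta> \<in> {\<theta>1, \<theta>2}" for \<theta>
    using ae
  proof eventually_elim
    case (elim x)
    have "1 - \<theta> * x \<noteq> 0" using dnz[OF th elim] .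
    moreover have "\<theta> \<noteq> 0" using th nz1 nz2 by auto
    ultimately show ?case unfolding h_def by (simp add: field_simps)
  qed
  have xhint: "integrable \<nu> (\<lambda>x. x * h \<theta> x)" if th: "\<theta> \<in> {\<theta>1, \<theta>2}" for \<theta>
  proof -
    have "integrable \<nu> (\<lambda>x. (h \<theta> x - 1) / \<theta>)" using hint[OF th] by simp
    moreover have m1: "(\<lambda>x. x * h \<theta> x) \<in> borel_measurable \<nu>"
      unfolding h_def by (intro meas) measurable
    moreover have m2: "(\<lambda>x. (h \<theta> x - 1) / \<theta>) \<in> borel_measurable \<nu>"
      unfolding h_def by (intro meas) measurable
    ultimately show ?thesis using integrable_cong_AE[OF m1 m2 xh_eq[OF th]] by simp
  qed
  have Mpos: "\<sigma> * integral\<^sup>L \<nu> (h \<theta>) > 0" if th: "\<theta> \<in> {\<theta>1, \<theta>2}" for \<theta>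
  proof -
    have pos: "AE x in \<nu>. \<sigma> * h \<theta> x > 0"
      using ae
    proof eventually_elim
      case (elim x)
      have "\<sigma> * h \<theta> x = 1 / (\<sigma> * (1 - \<theta> * x))" unfolding h_def using sig by (auto simp: minus_divide_right)
      then show ?case using bnd[OF th elim] d by simp
    qed
    have i: "integrable \<nu> (\<lambda>x. \<sigma> * h \<theta> x)" using hint[OF th] by simp
    have pos': "AE x in \<nu>. 0 \<le> \<sigma> * h \<theta> x" using pos by (auto elim: eventually_mono)
    have ge: "integral\<^sup>L \<nu> (\<lambda>x. \<sigma> * h \<theta> x) \<ge> 0"
      by (rule integral_nonneg_AE) (rule pos')
    have ne: "integral\<^sup>L \<nu> (\<lambda>x. \<sigma> * h \<theta> x) \<noteq> 0"
    proof
      assume z: "integral\<^sup>L \<nu> (\<lambda>x. \<sigma> * h \<theta> x) = 0"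
      have eqv: "(integral\<^sup>L \<nu> (\<lambda>x. \<sigma> * h \<theta> x) = 0) = (AE x in \<nu>. \<sigma> * h \<theta> x = 0)"
        by (rule integral_nonneg_eq_0_iff_AE[OF i pos'])
      have "AE x in \<nu>. \<sigma> * h \<theta> x = 0" using eqv z by blast
      with pos have "AE x in \<nu>. False" by eventually_elim auto
      then show False using AE_False emeasure_space_1 by simp
    qed
    have eq: "integral\<^sup>L \<nu> (\<lambda>x. \<sigma> * h \<theta> x) = \<sigma> * integral\<^sup>L \<nu> (h \<theta>)" by simp
    show ?thesis using ge ne unfolding eq by linarith
  qed
  have kf: "k_fun \<nu> \<theta> = integral\<^sup>L \<nu> (\<lambda>x. x * h \<theta> x) / integral\<^sup>L \<nu> (h \<theta>)" for \<theta>
  proof -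
    have "k_fun \<nu> \<theta> = integral\<^sup>L \<nu> (\<lambda>x. x * h \<theta> x / M_fun \<nu> \<theta>)"
      unfolding k_fun_def h_def by (simp add: mult.commute)
    also have "\<dots> = integral\<^sup>L \<nu> (\<lambda>x. x * h \<theta> x) / M_fun \<nu> \<theta>"
      by (rule integral_divide_zero)
    finally show ?thesis unfolding M_fun_def h_def by simp
  qed
  define M1 where "M1 = integral\<^sup>L \<nu> (h \<theta>1)"
  define M2 where "M2 = integral\<^sup>L \<nu> (h \<theta>2)"
  define X1 where "X1 = integral\<^sup>L \<nu> (\<lambda>x. x * h \<theta>1 x)"
  define X2 where "X2 = integral\<^sup>L \<nu> (\<lambda>x. x * h \<theta>2 x)"
  define c where "c = X1 / M1"
  have M1p: "\<sigma> * M1 > 0" and M2p: "\<sigma> * M2 > 0" using Mpos M1_def M2_def by auto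
  have M1nz: "M1 \<noteq> 0" and M2nz: "M2 \<noteq> 0" using M1p M2p by auto
  have i1: "integrable \<nu> (h \<theta>1)" and i2: "integrable \<nu> (h \<theta>2)"
    and xi1: "integrable \<nu> (\<lambda>x. x * h \<theta>1 x)" and xi2: "integrable \<nu> (\<lambda>x. x * h \<theta>2 x)"
    using hint xhint by auto
  have cA: "c \<le> A"
  proof -
    have "integral\<^sup>L \<nu> (\<lambda>x. \<sigma> * (A * h \<theta>1 x - x * h \<theta>1 x)) \<ge> 0"
    proof (rule integral_nonneg_AE)
      show "AE x in \<nu>. 0 \<le> \<sigma> * (A * h \<theta>1 x - x * h \<theta>1 x)"
        using ae
      proof eventually_elim
        case (elim x)
        have "\<sigma> * (A * h \<theta>1 x - x * h \<theta>1 x) = (A - x) / (\<sigma> * (1 - \<theta>1 * x))"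
        proof -
          have nz: "1 - \<theta>1 * x \<noteq> 0" "\<theta>1 * x - 1 \<noteq> 0" using dnz[of \<theta>1 x] elim by auto
          have e1: "(A - x) / (\<sigma> * (1 - \<theta>1 * x)) = \<sigma> * ((A - x) / (1 - \<theta>1 * x))"
            by (rule sig_div[OF sig])
          show ?thesis unfolding h_def e1 by (simp add: diff_divide_distrib)
        qed
        moreover have "\<sigma> * (1 - \<theta>1 * x) > 0" using bnd[of \<theta>1 x] elim d by auto
        ultimately show ?case using elim by simp
      qed
    qed
    also have "integral\<^sup>L \<nu> (\<lambda>x. \<sigma> * (A * h \<theta>1 x - x * h \<theta>1 x)) = \<sigma> * (A * M1 - X1)"
      using i1 xi1 unfolding X1_def M1_def by simp
    finally have "\<sigma> * (A * M1 - X1) \<ge> 0" .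
    then have "\<sigma> * (A * M1 - X1) / (\<sigma> * M1) \<ge> 0" using M1p by (rule divide_nonneg_pos)
    moreover have "\<sigma> * (A * M1 - X1) / (\<sigma> * M1) = (A * M1 - X1) / M1"
      using sig by auto
    moreover have "(A * M1 - X1) / M1 = A - c"
      using M1nz unfolding c_def by (simp add: diff_divide_distrib)
    ultimately show ?thesis by simp
  qed
  define lam where "lam = (1 - \<theta>1 * c) / (1 - \<theta>2 * c)"
  define g where "g x = (x - c)^2 / ((1 - \<theta>2 * x) * (1 - \<theta>1 * x) * (1 - \<theta>2 * c))" for x
  have c2: "1 - \<theta>2 * c \<noteq> 0" and c1: "1 - \<theta>1 * c \<noteq> 0" using dnz cA by auto
  have pw: "AE x in \<nu>. (x - c) * h \<theta>2 x = lam * ((x - c) * h \<theta>1 x) + (\<theta>2 - \<theta>1) * g x"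
    using ae
  proof eventually_elim
    case (elim x)
    have a1: "1 - \<theta>1 * x \<noteq> 0" and a2: "1 - \<theta>2 * x \<noteq> 0" using dnz elim by auto
    show ?case unfolding h_def g_def lam_def using pw_alg[OF a1 a2 c2] .
  qed
  have geq: "AE x in \<nu>. g x = ((x - c) * h \<theta>2 x - lam * ((x - c) * h \<theta>1 x)) / (\<theta>2 - \<theta>1)"
    using pw by eventually_elim (use lt in auto)
  have ci1: "integrable \<nu> (\<lambda>x. (x - c) * h \<theta>1 x)" using i1 xi1 by (simp add: left_diff_distrib)
  have ci2: "integrable \<nu> (\<lambda>x. (x - c) * h \<theta>2 x)" using i2 xi2 by (simp add: left_diff_distrib)
  have gi: "integrable \<nu> g"
  proof -
    have "integrable \<nu> (\<lambda>x. ((x - c) * h \<theta>2 x - lam * ((x - c) * h \<theta>1 x)) / (\<theta>2 - \<theta>1))"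
      using ci1 ci2 by simp
    moreover have m1: "g \<in> borel_measurable \<nu>"
      unfolding g_def by (intro meas) measurable
    moreover have m2: "(\<lambda>x. ((x - c) * h \<theta>2 x - lam * ((x - c) * h \<theta>1 x)) / (\<theta>2 - \<theta>1)) \<in> borel_measurable \<nu>"
      unfolding h_def by (intro meas) measurable
    ultimately show ?thesis using integrable_cong_AE[OF m1 m2 geq] by simp
  qed
  have zero: "integral\<^sup>L \<nu> (\<lambda>x. (x - c) * h \<theta>1 x) = 0"
  proof -
    have "integral\<^sup>L \<nu> (\<lambda>x. (x - c) * h \<theta>1 x) = X1 - c * M1"
      using i1 xi1 unfolding X1_def M1_def by (simp add: left_diff_distrib)
    then show ?thesis unfolding c_def using M1nz by simp
  qed
  have I2: "integral\<^sup>L \<nu> (\<lambda>x. (x - c) * h \<theta>2 x) = (\<theta>2 - \<theta>1) * integral\<^sup>L \<nu> g"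
  proof -
    have "integral\<^sup>L \<nu> (\<lambda>x. (x - c) * h \<theta>2 x) =
        integral\<^sup>L \<nu> (\<lambda>x. lam * ((x - c) * h \<theta>1 x) + (\<theta>2 - \<theta>1) * g x)"
    proof (rule integral_cong_AE)
      show "(\<lambda>x. (x - c) * h \<theta>2 x) \<in> borel_measurable \<nu>"
        unfolding h_def by (intro meas) measurable
      show "(\<lambda>x. lam * ((x - c) * h \<theta>1 x) + (\<theta>2 - \<theta>1) * g x) \<in> borel_measurable \<nu>"
        unfolding h_def g_def by (intro meas) measurable
    qed (rule pw)
    also have "\<dots> = lam * integral\<^sup>L \<nu> (\<lambda>x. (x - c) * h \<theta>1 x) + (\<theta>2 - \<theta>1) * integral\<^sup>L \<nu> g"
      using ci1 gi by simp
    finally show ?thesis using zero by simp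
  qed
  have gpos: "\<sigma> * integral\<^sup>L \<nu> g > 0"
  proof -
    have nn: "AE x in \<nu>. \<sigma> * g x \<ge> 0"
      using ae
    proof eventually_elim
      case (elim x)
      have p1: "\<sigma> * (1 - \<theta>1 * x) > 0" and p2: "\<sigma> * (1 - \<theta>2 * x) > 0"
        and p3: "\<sigma> * (1 - \<theta>2 * c) > 0"
        using bnd[of \<theta>1 x] bnd[of \<theta>2 x] bnd[of \<theta>2 c] elim cA d by auto
      have "\<sigma> * g x = (x - c)^2 / ((\<sigma> * (1 - \<theta>2 * x)) * (\<sigma> * (1 - \<theta>1 * x)) * (\<sigma> * (1 - \<theta>2 * c)))"
      proof -
        have "(\<sigma> * (1 - \<theta>2 * x)) * (\<sigma> * (1 - \<theta>1 * x)) * (\<sigma> * (1 - \<theta>2 * c))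
            = (\<sigma> * \<sigma>) * (\<sigma> * ((1 - \<theta>2 * x) * (1 - \<theta>1 * x) * (1 - \<theta>2 * c)))"
          by (simp add: ac_simps)
        also have "\<dots> = \<sigma> * ((1 - \<theta>2 * x) * (1 - \<theta>1 * x) * (1 - \<theta>2 * c))" using ss by simp
        finally have eqD: "(\<sigma> * (1 - \<theta>2 * x)) * (\<sigma> * (1 - \<theta>1 * x)) * (\<sigma> * (1 - \<theta>2 * c))
            = \<sigma> * ((1 - \<theta>2 * x) * (1 - \<theta>1 * x) * (1 - \<theta>2 * c))" .
        show ?thesis unfolding g_def eqD sig_div[OF sig] ..
      qed
      then show ?case using p1 p2 p3 by simp
    qed
    have i: "integrable \<nu> (\<lambda>x. \<sigma> * g x)" using gi by simp
    have ge: "integral\<^sup>L \<nu> (\<lambda>x. \<sigma> * g x) \<ge> 0"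
      by (rule integral_nonneg_AE) (use nn in auto)
    have ne: "integral\<^sup>L \<nu> (\<lambda>x. \<sigma> * g x) \<noteq> 0"
    proof
      assume "integral\<^sup>L \<nu> (\<lambda>x. \<sigma> * g x) = 0"
      then have z: "AE x in \<nu>. \<sigma> * g x = 0"
        using integral_nonneg_eq_0_iff_AE[OF i nn] by blast
      have "AE x in \<nu>. x = c"
        using z ae
      proof eventually_elim
        case (elim x)
        have p1: "1 - \<theta>1 * x \<noteq> 0" and p2: "1 - \<theta>2 * x \<noteq> 0" using dnz elim by auto
        have "g x = 0" using elim sig by auto
        then show ?case unfolding g_def using p1 p2 c2 by simp
      qed
      then show False using not_point[OF P sets nd] by blast
    qed
    have eq: "integral\<^sup>L \<nu> (\<lambda>x. \<sigma> * g x) = \<sigma> * integral\<^sup>L \<nu> g" by simp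
    show ?thesis using ge ne unfolding eq by linarith
  qed
  have k1: "k_fun \<nu> \<theta>1 = c" unfolding c_def X1_def M1_def kf ..
  have k2: "k_fun \<nu> \<theta>2 = X2 / M2" unfolding X2_def M2_def kf ..
  have "k_fun \<nu> \<theta>2 - k_fun \<nu> \<theta>1 = (X2 - c * M2) / M2"
    unfolding k1 k2 using M2nz by (simp add: diff_divide_distrib)
  also have "X2 - c * M2 = integral\<^sup>L \<nu> (\<lambda>x. (x - c) * h \<theta>2 x)"
    using i2 xi2 unfolding X2_def M2_def by (simp add: left_diff_distrib)
  also have "\<dots> = (\<theta>2 - \<theta>1) * integral\<^sup>L \<nu> g" by (rule I2)
  also have "(\<theta>2 - \<theta>1) * integral\<^sup>L \<nu> g / M2 = (\<theta>2 - \<theta>1) * (\<sigma> * integral\<^sup>L \<nu> g) / (\<sigma> * M2)"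
    using sig by auto
  finally have "k_fun \<nu> \<theta>2 - k_fun \<nu> \<theta>1 = (\<theta>2 - \<theta>1) * (\<sigma> * integral\<^sup>L \<nu> g) / (\<sigma> * M2)" .
  moreover have "(\<theta>2 - \<theta>1) * (\<sigma> * integral\<^sup>L \<nu> g) / (\<sigma> * M2) > 0"
    by (rule divide_pos_pos[OF mult_pos_pos]) (use lt gpos M2p in auto)
  ultimately show ?thesis by simp
qed

theorem proposition3p5:
  fixes \<nu> :: "real measure"
  assumes "prob_space \<nu>"
    and "sets \<nu> = sets borel"
    and "nondegenerate \<nu>"
    and "bdd_above (msupp \<nu>)"
    and "A_sup \<nu> < 0"
  shows "strict_mono_on {0<..} (k_fun \<nu>) \<and>
         strict_mono_on {..<1 / A_sup \<nu>} (k_fun \<nu>)"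
proof
  define A where "A = A_sup \<nu>"
  have An: "A < 0" using assms(5) A_def by simp
  have ae: "AE x in \<nu>. x \<le> A" using ae_le_A[OF assms(2,4)] A_def by simp
  show "strict_mono_on {0<..} (k_fun \<nu>)"
  proof (rule strict_mono_onI)
    fix r s :: real assume r: "r \<in> {0<..}" and s: "s \<in> {0<..}" and rs: "r < s"
    show "k_fun \<nu> r < k_fun \<nu> s"
    proof (rule key[OF assms(1,2,3) ae, of 1 1])
      fix \<theta> x :: real assume th: "\<theta> \<in> {r, s}" and x: "x \<le> A"
      have "\<theta> > 0" using th r s by auto
      moreover have "x \<le> 0" using x An by simp
      ultimately have "\<theta> * x \<le> 0" by (simp add: mult_nonneg_nonpos)
      then show "1 \<le> 1 * (1 - \<theta> * x)" by simp
    qed (use r s rs in auto)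
  qed
  show "strict_mono_on {..<1 / A_sup \<nu>} (k_fun \<nu>)"
  proof (rule strict_mono_onI)
    fix r s :: real assume r: "r \<in> {..<1 / A_sup \<nu>}" and s: "s \<in> {..<1 / A_sup \<nu>}" and rs: "r < s"
    have sA: "s < 1 / A" using s A_def by simp
    have neg: "1 / A < 0" using An by simp
    have s0: "s < 0" using sA neg by linarith
    have d: "s * A - 1 > 0"
    proof -
      have "(1 / A) * A < s * A" using mult_strict_right_mono_neg[OF sA An] .
      then show ?thesis using An by simp
    qed
    show "k_fun \<nu> r < k_fun \<nu> s"
    proof (rule key[OF assms(1,2,3) ae, of "-1" "s * A - 1"])
      fix \<theta> x :: real assume th: "\<theta> \<in> {r, s}" and x: "x \<le> A"
      have tn: "\<theta> < 0" and ts: "\<theta> \<le> s" using th rs s0 by auto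
      have "\<theta> * A \<le> \<theta> * x" using mult_left_mono_neg[OF x] tn by simp
      moreover have "s * A \<le> \<theta> * A" using mult_right_mono_neg[OF ts] An by simp
      ultimately show "s * A - 1 \<le> - 1 * (1 - \<theta> * x)" by simp
    qed (use d rs s0 in auto)
  qed
qed

end
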